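(* Away from characteristic points of a regular surface $\Sigma\subset\mathbb{M}$, the mean curvature $\mathcal H_{\nabla^{1,\alpha},L}:=\mathrm{tr}\,II^{\nabla^{1,\alpha},L}$ satisfies $$\mathcal H_{\nabla^{1,\alpha},\infty}:=\lim_{L\to+\infty}\mathcal H_{\nabla^{1,\alpha},L}=X_1(\bar p)+X_2(\bar q)-(1-\alpha)\bar p.$$
   Context: The affine group $\mathbb{M}$ is modeled on $\{(x_1,x_2,x_3)\in\mathbb{R}^3: x_1>0\}$ with product $(m,n,s)\star(\lambda,\mu,\nu)=(m\lambda,m\mu+n,\nu+s)$. Put $X_1=x_1\partial_{x_1}$, $X_2=x_1\partial_{x_2}+\partial_{x_3}$, $X_3=x_1\partial_{x_2}$, with dual coframe $\omega_1=\frac1{x_1}dx_1$, $\omega_2=dx_3$, $\omega=\frac1{x_1}dx_2-dx_3$. For a constant $L>0$, $g_L=\omega_1\otimes\omega_1+\omega_2\otimes\omega_2+L\,\omega\otimes\omega$, so $X_1,X_2,\widetilde X_3:=L^{-1/2}X_3$ is $g_L$-orthonormal; $\langle\cdot,\cdot\rangle_L$ denotes $g_L$, and $\nabla$ is the Levi-Civita connection of $g_L$. Let $H_1=\mathrm{span}\{X_1,X_2\}$, and let $P^1$, $P^{1,\perp}$ be the $g_L$-orthogonal projections onto $H_1$ and onto $H_1^\perp=\mathrm{span}\{X_3\}$. For a real constant $\alpha$, the first kind of deformed Schouten–Van Kampen connection is $\nabla^{1,\alpha}_XY=(1-\alpha)\nabla_XY+\alpha P^1\nabla_X(P^1Y)+\alpha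 P^{1,\perp}\nabla_X(P^{1,\perp}Y)$. A regular surface is a Euclidean $C^2$-smooth compact oriented surface $\Sigma=\{u=0\}$ with $u$ Euclidean $C^2$ and with nonvanishing Euclidean gradient. $\nabla_Hu=X_1(u)X_1+X_2(u)X_2$; a point of $\Sigma$ is characteristic if $\nabla_Hu=0$. Put $p=X_1u$, $q=X_2u$, $r=\widetilde X_3u$, $l=\sqrt{p^2+q^2}$, $l_L=\sqrt{p^2+q^2+r^2}$, $\bar p=p/l$, $\bar q=q/l$, $\bar p_L=p/l_L$, $\bar q_L=q/l_L$, $\bar r_L=r/l_L$; $v_L=\bar p_LX_1+\bar q_LX_2+\bar r_L\widetilde X_3$, $e_1=\bar qX_1-\bar pX_2$, $e_2=\bar r_L\bar pX_1+\bar r_L\bar qX_2-\frac{l}{l_L}\widetilde X_3$. The second fundamental form is $II^{\nabla^{1,\alpha},L}=(\langle\nabla^{1,\alpha}_{e_i}v_L,e_j\rangle_L)_{i,j=1,2}$. *)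

theory Defs
  imports "HOL-Analysis.Analysis"
begin

text \<open>The affine group M modelled on {x in R^3. x1 > 0}; points are real^3,
 vector fields are maps real^3 => real^3 (Euclidean components w.r.t. d/dx1,d/dx2,d/dx3).\<close>

definition Mset :: "(real^3) set" where
  "Mset = {x. x$1 > 0}"

definition X1 :: "real^3 \<Rightarrow> real^3" where
  "X1 x = vector [x$1, 0, 0]"

definition X2 :: "real^3 \<Rightarrow> real^3" where
  "X2 x = vector [0, x$1, 1]"

definition X3 :: "real^3 \<Rightarrow> real^3" where
  "X3 x = vector [0, x$1, 0]"

definition X3t :: "real \<Rightarrow> real^3 \<Rightarrow> real^3" where
  "X3t L x = (1 / sqrt L) *\<^sub>R X3 x"

definition vf :: "(real^3 \<Rightarrow> real^3) \<Rightarrow> (real^3 \<Rightarrow> 'b::real_normed_vector) \<Rightarrow> real^3 \<Rightarrow> 'b" where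
  "vf X f x = frechet_derivative f (at x) (X x)"

definition lie :: "(real^3 \<Rightarrow> real^3) \<Rightarrow> (real^3 \<Rightarrow> real^3) \<Rightarrow> real^3 \<Rightarrow> real^3" where
  "lie X Y x = vf X Y x - vf Y X x"

definition gL :: "real \<Rightarrow> real^3 \<Rightarrow> real^3 \<Rightarrow> real^3 \<Rightarrow> real" where
  "gL L x v w = (v$1 / x$1) * (w$1 / x$1) + (v$3) * (w$3)
      + L * ((v$2 / x$1 - v$3) * (w$2 / x$1 - w$3))"

text \<open>The g_L-orthonormal frame X1, X2, X3~.\<close>
definition frame :: "real \<Rightarrow> nat \<Rightarrow> real^3 \<Rightarrow> real^3" where
  "frame L i = (if i = 1 then X1 else if i = 2 then X2 else X3t L)"

text \<open>Christoffel symbols <nabla_{E_i} E_j, E_k> of the Levi-Civita connection in the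
 orthonormal frame, from the Koszul formula.\<close>
definition Gamma :: "real \<Rightarrow> nat \<Rightarrow> nat \<Rightarrow> nat \<Rightarrow> real^3 \<Rightarrow> real" where
  "Gamma L i j k x = (1/2) *
     (gL L x (lie (frame L i) (frame L j) x) (frame L k x)
      - gL L x (lie (frame L i) (frame L k) x) (frame L j x)
      - gL L x (lie (frame L j) (frame L k) x) (frame L i x))"

definition LC :: "real \<Rightarrow> (real^3 \<Rightarrow> real^3) \<Rightarrow> (real^3 \<Rightarrow> real^3) \<Rightarrow> real^3 \<Rightarrow> real^3" where
  "LC L X Y x = (\<Sum>k\<in>{1,2,3::nat}.
      (vf X (\<lambda>y. gL L y (Y y) (frame L k y)) x
       + (\<Sum>i\<in>{1,2,3::nat}. \<Sum>j\<in>{1,2,3::nat}.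
            gL L x (X x) (frame L i x) * gL L x (Y x) (frame L j x) * Gamma L i j k x))
      *\<^sub>R frame L k x)"

definition P1 :: "real \<Rightarrow> real^3 \<Rightarrow> real^3 \<Rightarrow> real^3" where
  "P1 L x v = gL L x v (X1 x) *\<^sub>R X1 x + gL L x v (X2 x) *\<^sub>R X2 x"

definition Pperp :: "real \<Rightarrow> real^3 \<Rightarrow> real^3 \<Rightarrow> real^3" where
  "Pperp L x v = gL L x v (X3t L x) *\<^sub>R X3t L x"

definition nabla1 :: "real \<Rightarrow> real \<Rightarrow> (real^3 \<Rightarrow> real^3) \<Rightarrow> (real^3 \<Rightarrow> real^3) \<Rightarrow> real^3 \<Rightarrow> real^3" where
  "nabla1 L \<alpha> X Y x = (1 - \<alpha>) *\<^sub>R LC L X Y x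
      + \<alpha> *\<^sub>R P1 L x (LC L X (\<lambda>y. P1 L y (Y y)) x)
      + \<alpha> *\<^sub>R Pperp L x (LC L X (\<lambda>y. Pperp L y (Y y)) x)"

definition C1_on :: "(real^3) set \<Rightarrow> (real^3 \<Rightarrow> real) \<Rightarrow> bool" where
  "C1_on S f \<longleftrightarrow> (\<forall>x\<in>S. f differentiable (at x))
      \<and> (\<forall>v. continuous_on S (\<lambda>x. frechet_derivative f (at x) v))"

definition C2_on :: "(real^3) set \<Rightarrow> (real^3 \<Rightarrow> real) \<Rightarrow> bool" where
  "C2_on S f \<longleftrightarrow> C1_on S f \<and> (\<forall>v. C1_on S (\<lambda>x. frechet_derivative f (at x) v))"

definition surf :: "(real^3 \<Rightarrow> real) \<Rightarrow> (real^3) set" where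
  "surf u = {x \<in> Mset. u x = 0}"

definition nablaH :: "(real^3 \<Rightarrow> real) \<Rightarrow> real^3 \<Rightarrow> real^3" where
  "nablaH u x = vf X1 u x *\<^sub>R X1 x + vf X2 u x *\<^sub>R X2 x"

definition pf :: "(real^3 \<Rightarrow> real) \<Rightarrow> real^3 \<Rightarrow> real" where "pf u x = vf X1 u x"
definition qf :: "(real^3 \<Rightarrow> real) \<Rightarrow> real^3 \<Rightarrow> real" where "qf u x = vf X2 u x"
definition rf :: "real \<Rightarrow> (real^3 \<Rightarrow> real) \<Rightarrow> real^3 \<Rightarrow> real" where "rf L u x = vf (X3t L) u x"
definition lf :: "(real^3 \<Rightarrow> real) \<Rightarrow> real^3 \<Rightarrow> real" where
  "lf u x = sqrt ((pf u x)^2 + (qf u x)^2)"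
definition lLf :: "real \<Rightarrow> (real^3 \<Rightarrow> real) \<Rightarrow> real^3 \<Rightarrow> real" where
  "lLf L u x = sqrt ((pf u x)^2 + (qf u x)^2 + (rf L u x)^2)"
definition pbar :: "(real^3 \<Rightarrow> real) \<Rightarrow> real^3 \<Rightarrow> real" where "pbar u x = pf u x / lf u x"
definition qbar :: "(real^3 \<Rightarrow> real) \<Rightarrow> real^3 \<Rightarrow> real" where "qbar u x = qf u x / lf u x"
definition pbarL :: "real \<Rightarrow> (real^3 \<Rightarrow> real) \<Rightarrow> real^3 \<Rightarrow> real" where "pbarL L u x = pf u x / lLf L u x"
definition qbarL :: "real \<Rightarrow> (real^3 \<Rightarrow> real) \<Rightarrow> real^3 \<Rightarrow> real" where "qbarL L u x = qf u x / lLf L u x"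
definition rbarL :: "real \<Rightarrow> (real^3 \<Rightarrow> real) \<Rightarrow> real^3 \<Rightarrow> real" where "rbarL L u x = rf L u x / lLf L u x"

definition vL :: "real \<Rightarrow> (real^3 \<Rightarrow> real) \<Rightarrow> real^3 \<Rightarrow> real^3" where
  "vL L u x = pbarL L u x *\<^sub>R X1 x + qbarL L u x *\<^sub>R X2 x + rbarL L u x *\<^sub>R X3t L x"

definition e1 :: "(real^3 \<Rightarrow> real) \<Rightarrow> real^3 \<Rightarrow> real^3" where
  "e1 u x = qbar u x *\<^sub>R X1 x - pbar u x *\<^sub>R X2 x"

definition e2 :: "real \<Rightarrow> (real^3 \<Rightarrow> real) \<Rightarrow> real^3 \<Rightarrow> real^3" where
  "e2 L u x = (rbarL L u x * pbar u x) *\<^sub>R X1 x + (rbarL L u x * qbar u x) *\<^sub>R X2 x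
      - (lf u x / lLf L u x) *\<^sub>R X3t L x"

definition eframe :: "real \<Rightarrow> (real^3 \<Rightarrow> real) \<Rightarrow> nat \<Rightarrow> real^3 \<Rightarrow> real^3" where
  "eframe L u i = (if i = 1 then e1 u else e2 L u)"

definition IIf :: "real \<Rightarrow> real \<Rightarrow> (real^3 \<Rightarrow> real) \<Rightarrow> nat \<Rightarrow> nat \<Rightarrow> real^3 \<Rightarrow> real" where
  "IIf L \<alpha> u i j x = gL L x (nabla1 L \<alpha> (eframe L u i) (vL L u) x) (eframe L u j x)"

definition meanH :: "real \<Rightarrow> real \<Rightarrow> (real^3 \<Rightarrow> real) \<Rightarrow> real^3 \<Rightarrow> real" where
  "meanH L \<alpha> u x = IIf L \<alpha> u 1 1 x + IIf L \<alpha> u 2 2 x"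

end

theory Submission imports Defs "HOL-Real_Asymp.Real_Asymp" begin
lemma X1_eq: "X1 = (\<lambda>x. (x$1) *\<^sub>R vector [1,0,0])"
  by (rule ext) (simp add: X1_def vec_eq_iff forall_3)
lemma X2_eq: "X2 = (\<lambda>x. (x$1) *\<^sub>R vector [0,1,0] + vector[0,0,1])"
  by (rule ext) (simp add: X2_def vec_eq_iff forall_3)
lemma X3_eq: "X3 = (\<lambda>x. (x$1) *\<^sub>R vector [0,1,0])"
  by (rule ext) (simp add: X3_def vec_eq_iff forall_3)
lemma d1: "((\<lambda>x::real^3. x$1) has_derivative (\<lambda>h. h$1)) (at x)"
  by (rule bounded_linear_imp_has_derivative) (rule bounded_linear_vec_nth)
lemma dX1: "(X1 has_derivative (\<lambda>h. (h$1) *\<^sub>R vector [1,0,0])) (at x)"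
  unfolding X1_eq by (auto intro!: derivative_eq_intros d1)
lemma dX2: "(X2 has_derivative (\<lambda>h. (h$1) *\<^sub>R vector [0,1,0])) (at x)"
  unfolding X2_eq by (auto intro!: derivative_eq_intros d1)
lemma dX3: "(X3 has_derivative (\<lambda>h. (h$1) *\<^sub>R vector [0,1,0])) (at x)"
  unfolding X3_eq by (auto intro!: derivative_eq_intros d1)
lemma dX3t: "(X3t L has_derivative (\<lambda>h. (1 / sqrt L) *\<^sub>R ((h$1) *\<^sub>R vector [0,1,0]))) (at x)"
  unfolding X3t_def[abs_def] by (auto intro!: derivative_eq_intros dX3)

lemmas fdX = dX1[THEN frechet_derivative_at, symmetric] dX2[THEN frechet_derivative_at, symmetric]
  dX3t[THEN frechet_derivative_at, symmetric]

lemma lie_self: "lie X X x = 0" by (simp add: lie_def)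

lemma lie_tab:
  "lie X1 X2 x = X3 x" "lie X2 X1 x = - X3 x" "lie X1 (X3t L) x = X3t L x" "lie (X3t L) X1 x = - X3t L x"
  "lie X2 (X3t L) x = 0" "lie (X3t L) X2 x = 0"
  by (simp_all add: lie_def vf_def fdX, simp_all add: X1_def X2_def X3_def X3t_def vec_eq_iff forall_3)

lemma Mset_pos: "x \<in> Mset \<Longrightarrow> x$1 > 0" by (simp add: Mset_def)

lemma gL_tab:
  assumes "x$1 > 0" "L > 0"
  shows "gL L x (X3 x) (X1 x) = 0" "gL L x (X3 x) (X2 x) = 0" "gL L x (X3 x) (X3t L x) = sqrt L"
   "gL L x (X3t L x) (X1 x) = 0" "gL L x (X3t L x) (X2 x) = 0" "gL L x (X3t L x) (X3t L x) = 1"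
   "gL L x (X1 x) (X1 x) = 1" "gL L x (X1 x) (X2 x) = 0" "gL L x (X1 x) (X3t L x) = 0"
   "gL L x (X2 x) (X1 x) = 0" "gL L x (X2 x) (X2 x) = 1" "gL L x (X2 x) (X3t L x) = 0"
   "gL L x 0 v = 0" "gL L x (- v) w = - gL L x v w"
  using assms by (simp_all add: gL_def X1_def X2_def X3_def X3t_def field_simps real_sqrt_divide)

lemma Gamma_tab:
  assumes "x \<in> Mset" "L > 0" "i \<in> {1,2,3}" "j \<in> {1,2,3}" "k \<in> {1,2,3}"
  shows "Gamma L i j k x = (if (i,j,k) = (1,2,3) \<or> (i,j,k) = (2,3,1) \<or> (i,j,k) = (3,2,1) then sqrt L / 2
     else if (i,j,k) = (1,3,2) \<or> (i,j,k) = (2,1,3) \<or> (i,j,k) = (3,1,2) then - sqrt L / 2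
     else if (i,j,k) = (3,1,3) then -1 else if (i,j,k) = (3,3,1) then 1 else 0)"
  using assms Mset_pos[OF assms(1)]
  by (auto simp: Gamma_def frame_def lie_self lie_tab gL_tab)
lemma gL_lin:
  "gL L x (v + w) z = gL L x v z + gL L x w z"
  "gL L x (v - w) z = gL L x v z - gL L x w z"
  "gL L x (c *\<^sub>R v) z = c * gL L x v z"
  "gL L x z (v + w) = gL L x z v + gL L x z w"
  "gL L x z (v - w) = gL L x z v - gL L x z w"
  "gL L x z (c *\<^sub>R v) = c * gL L x z v"
  by (simp_all add: gL_def algebra_simps add_divide_distrib diff_divide_distrib)

lemma gL_sym: "gL L x v w = gL L x w v" by (simp add: gL_def algebra_simps)

lemma coord:
  assumes "x$1 > 0" "L > 0"
  shows "gL L x (a *\<^sub>R X1 x + b *\<^sub>R X2 x + c *\<^sub>R X3t L x) (X1 x) = a"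
    "gL L x (a *\<^sub>R X1 x + b *\<^sub>R X2 x + c *\<^sub>R X3t L x) (X2 x) = b"
    "gL L x (a *\<^sub>R X1 x + b *\<^sub>R X2 x + c *\<^sub>R X3t L x) (X3t L x) = c"
  using assms by (simp_all add: gL_lin gL_tab)

lemma frame_ip:
  assumes "x$1 > 0" "L > 0"
  shows "gL L x (a1 *\<^sub>R X1 x + a2 *\<^sub>R X2 x + a3 *\<^sub>R X3t L x) (b1 *\<^sub>R X1 x + b2 *\<^sub>R X2 x + b3 *\<^sub>R X3t L x)
     = a1*b1 + a2*b2 + a3*b3"
  using assms by (simp add: gL_lin gL_tab)

lemma open_Mset: "open Mset"
  unfolding Mset_def using open_halfspace_component_gt_cart[of 0 1] by simp

lemma fd_local:
  assumes "open S" "x \<in> S" "\<And>y. y \<in> S \<Longrightarrow> f y = g y"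
  shows "frechet_derivative f (at x) = frechet_derivative g (at x)"
proof -
  have "\<And>f'. (f has_derivative f') (at x) = (g has_derivative f') (at x)"
    using has_derivative_transform_within_open[OF _ assms(1,2), of f _ UNIV g]
      has_derivative_transform_within_open[OF _ assms(1,2), of g _ UNIV f] assms(3) by metis
  then show ?thesis unfolding frechet_derivative_def by simp
qed

lemma vf_local:
  assumes "open S" "x \<in> S" "\<And>y. y \<in> S \<Longrightarrow> f y = g y"
  shows "vf X f x = vf X g x"
  unfolding vf_def using fd_local[OF assms] by simp

lemma LC_comp:
  assumes L: "L > 0" and x: "x \<in> Mset"
    and Y: "\<forall>y\<in>Mset. Y y = A y *\<^sub>R X1 y + B y *\<^sub>R X2 y + C y *\<^sub>R X3t L y"
    and X: "X x = z1 *\<^sub>R X1 x + z2 *\<^sub>R X2 x + z3 *\<^sub>R X3t L x"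
  shows "LC L X Y x =
     (vf X A x + sqrt L / 2 * (z2 * C x + z3 * B x) + z3 * C x) *\<^sub>R X1 x
   + (vf X B x - sqrt L / 2 * (z1 * C x + z3 * A x)) *\<^sub>R X2 x
   + (vf X C x + sqrt L / 2 * (z1 * B x - z2 * A x) - z3 * A x) *\<^sub>R X3t L x"
proof -
  have x1: "x$1 > 0" using x by (simp add: Mset_def)
  have v1: "vf X (\<lambda>y. gL L y (Y y) (X1 y)) x = vf X A x"
    by (rule vf_local[OF open_Mset x]) (simp add: Y coord L Mset_def)
  have v2: "vf X (\<lambda>y. gL L y (Y y) (X2 y)) x = vf X B x"
    by (rule vf_local[OF open_Mset x]) (simp add: Y coord L Mset_def)
  have v3: "vf X (\<lambda>y. gL L y (Y y) (X3t L y)) x = vf X C x"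
    by (rule vf_local[OF open_Mset x]) (simp add: Y coord L Mset_def)
  have Yx: "Y x = A x *\<^sub>R X1 x + B x *\<^sub>R X2 x + C x *\<^sub>R X3t L x" using Y x by simp
  have c: "gL L x (X x) (X1 x) = z1" "gL L x (X x) (X2 x) = z2" "gL L x (X x) (X3t L x) = z3"
    "gL L x (Y x) (X1 x) = A x" "gL L x (Y x) (X2 x) = B x" "gL L x (Y x) (X3t L x) = C x"
    unfolding X Yx using coord[OF x1 L] by simp_all
  show ?thesis
    unfolding LC_def
    by (simp add: frame_def v1 v2 v3 c Gamma_tab[OF x L] algebra_simps)
qed
lemma vf_const0: "vf X (\<lambda>y. 0::real) x = 0" by (simp add: vf_def)

lemma nabla1_ip:
  assumes L: "L > 0" and x: "x \<in> Mset"
    and Y: "\<forall>y\<in>Mset. Y y = A y *\<^sub>R X1 y + B y *\<^sub>R X2 y + C y *\<^sub>R X3t L y"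
    and X: "X x = z1 *\<^sub>R X1 x + z2 *\<^sub>R X2 x + z3 *\<^sub>R X3t L x"
  shows "gL L x (nabla1 L \<alpha> X Y x) (X x) = z1 * vf X A x + z2 * vf X B x + z3 * vf X C x
     + (2 - \<alpha>) * (sqrt L / 2) * z3 * (z1 * B x - z2 * A x) + (1 - \<alpha>) * (z1 * z3 * C x - z3^2 * A x)"
proof -
  have x1: "x$1 > 0" using x by (simp add: Mset_def)
  have P1Y: "\<forall>y\<in>Mset. P1 L y (Y y) = A y *\<^sub>R X1 y + B y *\<^sub>R X2 y + (\<lambda>y. 0) y *\<^sub>R X3t L y"
    using Y coord L by (simp add: P1_def Mset_def)
  have PpY: "\<forall>y\<in>Mset. Pperp L y (Y y) = (\<lambda>y. 0) y *\<^sub>R X1 y + (\<lambda>y. 0) y *\<^sub>R X2 y + C y *\<^sub>R X3t L y"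
    using Y coord L by (simp add: Pperp_def Mset_def)
  note l1 = LC_comp[where X=X and x=x and L=L and A=A and B=B and C=C and Y=Y, OF L x Y X]
  note l2 = LC_comp[where X=X and x=x and L=L and A=A and B=B and C="\<lambda>y. 0" and Y="\<lambda>y. P1 L y (Y y)", OF L x P1Y X, simplified vf_const0]
  note l3 = LC_comp[where X=X and x=x and L=L and A="\<lambda>y. 0" and B="\<lambda>y. 0" and C=C and Y="\<lambda>y. Pperp L y (Y y)", OF L x PpY X, simplified vf_const0]
  have P1x: "\<And>a b c. P1 L x (a *\<^sub>R X1 x + b *\<^sub>R X2 x + c *\<^sub>R X3t L x) = a *\<^sub>R X1 x + b *\<^sub>R X2 x + 0 *\<^sub>R X3t L x"
    using coord[OF x1 L] by (simp add: P1_def)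
  have Ppx: "\<And>a b c. Pperp L x (a *\<^sub>R X1 x + b *\<^sub>R X2 x + c *\<^sub>R X3t L x) = 0 *\<^sub>R X1 x + 0 *\<^sub>R X2 x + c *\<^sub>R X3t L x"
    using coord[OF x1 L] by (simp add: Pperp_def)
  show ?thesis
    unfolding nabla1_def gL_lin unfolding l1 l2 l3 unfolding P1x Ppx unfolding X frame_ip[OF x1 L]
    by (simp add: field_simps power2_eq_square)
qed
lemma lin3:
  fixes f :: "real^3 \<Rightarrow> real"
  assumes "linear f"
  shows "f (a *\<^sub>R v + b *\<^sub>R w + c *\<^sub>R z) = a * f v + b * f w + c * f z"
  using assms by (simp add: linear_add linear_scale)

lemma normd3:
  fixes f g h k :: "real^3 \<Rightarrow> real"
  assumes "(f has_derivative f') (at x)" "(g has_derivative g') (at x)" "(h has_derivative h') (at x)"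
    "(k has_derivative k') (at x)" and pos: "f x ^ 2 + g x ^ 2 + h x ^ 2 > 0"
  shows "((\<lambda>y. k y / sqrt (f y ^ 2 + g y ^ 2 + h y ^ 2)) has_derivative
     (\<lambda>v. k' v / sqrt (f x ^ 2 + g x ^ 2 + h x ^ 2)
        - k x * (f x * f' v + g x * g' v + h x * h' v) / sqrt (f x ^ 2 + g x ^ 2 + h x ^ 2) ^ 3)) (at x)"
proof -
  define s where "s = sqrt (f x ^ 2 + g x ^ 2 + h x ^ 2)"
  have sN: "sqrt (f x ^ 2 + g x ^ 2 + h x ^ 2) > 0" using pos by simp
  have sq: "sqrt (f x ^ 2 + g x ^ 2 + h x ^ 2) ^ 2 = f x ^ 2 + g x ^ 2 + h x ^ 2" using pos by simp
  show ?thesis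
    apply (rule derivative_eq_intros refl assms)+
    using sN pos apply simp
    using sN pos apply simp
    apply (rule ext)
    apply (simp only: s_def[symmetric])
    using sN[folded s_def]
    apply (simp add: field_simps power3_eq_cube)
    done
qed
lemma normd2:
  fixes f g k :: "real^3 \<Rightarrow> real"
  assumes "(f has_derivative f') (at x)" "(g has_derivative g') (at x)"
    "(k has_derivative k') (at x)" and pos: "f x ^ 2 + g x ^ 2 > 0"
  shows "((\<lambda>y. k y / sqrt (f y ^ 2 + g y ^ 2)) has_derivative
     (\<lambda>v. k' v / sqrt (f x ^ 2 + g x ^ 2)
        - k x * (f x * f' v + g x * g' v) / sqrt (f x ^ 2 + g x ^ 2) ^ 3)) (at x)"
  using normd3[OF assms(1,2) has_derivative_const[of 0 "at x"] assms(3)] pos by simp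

definition Ef :: "real \<Rightarrow> real \<Rightarrow> real \<Rightarrow> real \<Rightarrow> real \<Rightarrow> real \<Rightarrow> real \<Rightarrow> real \<Rightarrow> real \<Rightarrow> real
   \<Rightarrow> real \<Rightarrow> real \<Rightarrow> real \<Rightarrow> real \<Rightarrow> real" where
 "Ef \<alpha> p q r A1 A2 A3 B1 B2 B3 C1 C2 C3 t =
 (let l = sqrt (p^2+q^2); lt = sqrt (p^2+q^2+(t*r)^2); pb = p/l; qb = q/l; c = t*r/lt; m = l/lt;
   d = (\<lambda>k kd pd qd rd. kd/lt - k*(p*pd + q*qd + (t*r)*rd)/lt^3);
   DA = (\<lambda>w1 w2 w3. d p (w1*A1+w2*A2+w3*A3) (w1*A1+w2*A2+w3*A3) (w1*B1+w2*B2+w3*B3) (t*(w1*C1+w2*C2+w3*C3)));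
   DB = (\<lambda>w1 w2 w3. d q (w1*B1+w2*B2+w3*B3) (w1*A1+w2*A2+w3*A3) (w1*B1+w2*B2+w3*B3) (t*(w1*C1+w2*C2+w3*C3)));
   DC = (\<lambda>w1 w2 w3. d (t*r) (t*(w1*C1+w2*C2+w3*C3)) (w1*A1+w2*A2+w3*A3) (w1*B1+w2*B2+w3*B3) (t*(w1*C1+w2*C2+w3*C3)))
  in qb * DA qb (-pb) 0 - pb * DB qb (-pb) 0
   + (c*pb) * DA (c*pb) (c*qb) (-m*t) + (c*qb) * DB (c*pb) (c*qb) (-m*t) - m * DC (c*pb) (c*qb) (-m*t)
   - (1-\<alpha>)*(m*c^2*pb + m^2*(p/lt)))"

lemma Ef_cont:
  assumes "p^2 + q^2 > 0"
  shows "isCont (Ef \<alpha> p q r A1 A2 A3 B1 B2 B3 C1 C2 C3) 0"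
  unfolding Ef_def[abs_def] Let_def using assms
  by (intro continuous_intros) auto

lemma Ef_0:
  assumes "p^2 + q^2 > 0"
  shows "Ef \<alpha> p q r A1 A2 A3 B1 B2 B3 C1 C2 C3 0 =
    (A1 / sqrt (p^2+q^2) - p * (p*A1 + q*B1) / sqrt (p^2+q^2)^3)
  + (B2 / sqrt (p^2+q^2) - q * (p*A2 + q*B2) / sqrt (p^2+q^2)^3) - (1-\<alpha>) * (p / sqrt (p^2+q^2))"
proof -
  define l where "l = sqrt (p^2+q^2)"
  have l: "l > 0" "l^2 = p^2+q^2" using assms by (auto simp: l_def)
  have lt0: "sqrt (p^2+q^2+(0*r)^2) = l" by (simp add: l_def)
  have l2: "p*p + q*q = l*l" using l(2) by (simp add: power2_eq_square)
  have l3: "p^2 + q^2 = l^2" using l(2) by simp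
  show ?thesis unfolding Ef_def Let_def lt0 l_def[symmetric] l3
    using l(1) apply (simp add: field_simps power2_eq_square power3_eq_cube)
    using l2 by algebra
qed
lemma X_axis:
  "X1 y = (y$1) *\<^sub>R axis 1 1" "X2 y = (y$1) *\<^sub>R axis 2 1 + axis 3 1" "X3 y = (y$1) *\<^sub>R axis 2 1"
  by (simp_all add: X1_def X2_def X3_def vec_eq_iff forall_3 axis_def)

theorem proposition2p16:
  fixes u :: "real^3 \<Rightarrow> real" and \<alpha> :: real and x0 :: "real^3"
  assumes "C2_on Mset u"
    and "compact (surf u)"
    and "\<forall>x\<in>surf u. frechet_derivative u (at x) \<noteq> (\<lambda>v. 0)"
    and "x0 \<in> surf u"
    and "nablaH u x0 \<noteq> 0"
  shows "((\<lambda>L. meanH L \<alpha> u x0) \<longlongrightarrow>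
           vf X1 (pbar u) x0 + vf X2 (qbar u) x0 - (1 - \<alpha>) * pbar u x0) at_top"
proof -
  have x0M: "x0 \<in> Mset" using assms(4) by (simp add: surf_def)
  have x1: "x0$1 > 0" using x0M by (simp add: Mset_def)
  have udiff: "\<And>y. y \<in> Mset \<Longrightarrow> u differentiable (at y)"
    using assms(1) by (simp add: C2_on_def C1_on_def)
  have ulin: "\<And>y. y \<in> Mset \<Longrightarrow> linear (frechet_derivative u (at y))"
    using udiff linear_frechet_derivative by blast
  define G where "G i y = frechet_derivative u (at y) (axis i 1)" for i y
  have Gd: "((G i) has_derivative frechet_derivative (G i) (at x0)) (at x0)" for i
  proof -
    have "C1_on Mset (\<lambda>x. frechet_derivative u (at x) (axis i 1))"
      using assms(1) by (simp add: C2_on_def)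
    then have "G i differentiable (at x0)" using x0M by (simp add: C1_on_def G_def[abs_def])
    then show ?thesis using frechet_derivative_works by blast
  qed
  have pf_loc: "pf u y = y$1 * G 1 y" if "y \<in> Mset" for y
    using ulin[OF that] by (simp add: pf_def vf_def X_axis G_def linear_scale)
  have qf_loc: "qf u y = y$1 * G 2 y + G 3 y" if "y \<in> Mset" for y
    using ulin[OF that] by (simp add: qf_def vf_def X_axis G_def linear_scale linear_add)
  have R_loc: "vf X3 u y = y$1 * G 2 y" if "y \<in> Mset" for y
    using ulin[OF that] by (simp add: vf_def X_axis G_def linear_scale)
  have rf_loc: "rf L u y = (1 / sqrt L) * vf X3 u y" if "y \<in> Mset" for y L
    using ulin[OF that] by (simp add: rf_def vf_def X3t_def linear_scale)
  have pdiff: "pf u differentiable (at x0)"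
    apply (rule differentiableI)
    apply (rule has_derivative_transform_within_open[OF has_derivative_mult[OF d1 Gd[of 1]] open_Mset x0M])
    by (simp add: pf_loc)
  have qdiff: "qf u differentiable (at x0)"
    apply (rule differentiableI)
    apply (rule has_derivative_transform_within_open[OF has_derivative_add[OF has_derivative_mult[OF d1 Gd[of 2]] Gd[of 3]] open_Mset x0M])
    by (simp add: qf_loc)
  have rdiff: "vf X3 u differentiable (at x0)"
    apply (rule differentiableI)
    apply (rule has_derivative_transform_within_open[OF has_derivative_mult[OF d1 Gd[of 2]] open_Mset x0M])
    by (simp add: R_loc)
  define Dp where "Dp = frechet_derivative (pf u) (at x0)"
  define Dq where "Dq = frechet_derivative (qf u) (at x0)"
  define Dr where "Dr = frechet_derivative (vf X3 u) (at x0)"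
  have hp: "(pf u has_derivative Dp) (at x0)" using pdiff frechet_derivative_works Dp_def by blast
  have hq: "(qf u has_derivative Dq) (at x0)" using qdiff frechet_derivative_works Dq_def by blast
  have hr: "(vf X3 u has_derivative Dr) (at x0)" using rdiff frechet_derivative_works Dr_def by blast
  have lp: "linear Dp" "linear Dq" "linear Dr" using hp hq hr has_derivative_linear by blast+
  define p where "p = pf u x0"
  define q where "q = qf u x0"
  define r where "r = vf X3 u x0"
  have pos: "p^2 + q^2 > 0"
  proof (rule ccontr)
    assume "\<not> p^2 + q^2 > 0"
    then have "p = 0" "q = 0" by (auto simp: sum_power2_gt_zero_iff)
    then show False using assms(5) by (simp add: nablaH_def p_def q_def pf_def qf_def)
  qed
  have lp0: "sqrt (p^2+q^2) > 0" using pos by simp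
  define A1 where "A1 = Dp (X1 x0)"
  define A2 where "A2 = Dp (X2 x0)"
  define A3 where "A3 = Dp (X3 x0)"
  define B1 where "B1 = Dq (X1 x0)"
  define B2 where "B2 = Dq (X2 x0)"
  define B3 where "B3 = Dq (X3 x0)"
  define C1 where "C1 = Dr (X1 x0)"
  define C2 where "C2 = Dr (X2 x0)"
  define C3 where "C3 = Dr (X3 x0)"
  have pbar_eq: "pbar u = (\<lambda>y. pf u y / sqrt (pf u y ^ 2 + qf u y ^ 2))"
    by (rule ext) (simp add: pbar_def lf_def)
  have qbar_eq: "qbar u = (\<lambda>y. qf u y / sqrt (pf u y ^ 2 + qf u y ^ 2))"
    by (rule ext) (simp add: qbar_def lf_def)
  have hpb: "(pbar u has_derivative (\<lambda>v. Dp v / sqrt (p^2+q^2) - p * (p * Dp v + q * Dq v) / sqrt (p^2+q^2)^3)) (at x0)"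
    unfolding pbar_eq p_def q_def by (rule normd2[OF hp hq hp]) (use pos in \<open>simp add: p_def q_def\<close>)
  have hqb: "(qbar u has_derivative (\<lambda>v. Dq v / sqrt (p^2+q^2) - q * (p * Dp v + q * Dq v) / sqrt (p^2+q^2)^3)) (at x0)"
    unfolding qbar_eq p_def q_def by (rule normd2[OF hp hq hq]) (use pos in \<open>simp add: p_def q_def\<close>)
  have target: "vf X1 (pbar u) x0 + vf X2 (qbar u) x0 - (1 - \<alpha>) * pbar u x0
      = Ef \<alpha> p q r A1 A2 A3 B1 B2 B3 C1 C2 C3 0"
    unfolding Ef_0[OF pos] vf_def frechet_derivative_at[OF hpb, symmetric] frechet_derivative_at[OF hqb, symmetric]
    by (simp add: A1_def A2_def B1_def B2_def pbar_def lf_def p_def q_def)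
  have main_eq: "meanH L \<alpha> u x0 = Ef \<alpha> p q r A1 A2 A3 B1 B2 B3 C1 C2 C3 (1 / sqrt L)" if L: "L > 0" for L
  proof -
    define t where "t = 1 / sqrt L"
    have X3tx: "X3t L x0 = t *\<^sub>R X3 x0" by (simp add: X3t_def t_def)
    have hrf: "(rf L u has_derivative (\<lambda>v. t * Dr v)) (at x0)"
      apply (rule has_derivative_transform_within_open[OF has_derivative_mult_right[OF hr] open_Mset x0M])
      by (simp add: rf_loc t_def)
    have rx: "rf L u x0 = t * r" using rf_loc[OF x0M] by (simp add: r_def t_def)
    have pos3: "pf u x0 ^ 2 + qf u x0 ^ 2 + rf L u x0 ^ 2 > 0"
      using pos by (simp add: p_def[symmetric] q_def[symmetric] add_pos_nonneg)
    define lt where "lt = sqrt (p^2+q^2+(t*r)^2)"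
    have lLx: "lLf L u x0 = lt" by (simp add: lLf_def lt_def rx p_def q_def)
    have pbarL_eq: "pbarL L u = (\<lambda>y. pf u y / sqrt (pf u y ^ 2 + qf u y ^ 2 + rf L u y ^ 2))"
      by (rule ext) (simp add: pbarL_def lLf_def)
    have qbarL_eq: "qbarL L u = (\<lambda>y. qf u y / sqrt (pf u y ^ 2 + qf u y ^ 2 + rf L u y ^ 2))"
      by (rule ext) (simp add: qbarL_def lLf_def)
    have rbarL_eq: "rbarL L u = (\<lambda>y. rf L u y / sqrt (pf u y ^ 2 + qf u y ^ 2 + rf L u y ^ 2))"
      by (rule ext) (simp add: rbarL_def lLf_def)
    note hA = normd3[OF hp hq hrf hp pos3, folded pbarL_eq, unfolded rx p_def[symmetric] q_def[symmetric] lt_def[symmetric]]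
    note hB = normd3[OF hp hq hrf hq pos3, folded qbarL_eq, unfolded rx p_def[symmetric] q_def[symmetric] lt_def[symmetric]]
    note hC = normd3[OF hp hq hrf hrf pos3, folded rbarL_eq, unfolded rx p_def[symmetric] q_def[symmetric] lt_def[symmetric]]
    define pb where "pb = p / sqrt (p^2+q^2)"
    define qb where "qb = q / sqrt (p^2+q^2)"
    define c where "c = t * r / lt"
    define m where "m = sqrt (p^2+q^2) / lt"
    have vals: "pbar u x0 = pb" "qbar u x0 = qb" "rbarL L u x0 = c" "lf u x0 / lLf L u x0 = m"
      "pbarL L u x0 = p / lt" "qbarL L u x0 = q / lt"
      by (simp_all add: pbar_def qbar_def rbarL_def pbarL_def qbarL_def lf_def lLx rx pb_def qb_def c_def m_def p_def q_def)
    have e1x: "e1 u x0 = qb *\<^sub>R X1 x0 + (-pb) *\<^sub>R X2 x0 + 0 *\<^sub>R X3t L x0"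
      by (simp add: e1_def vals)
    have e1x': "e1 u x0 = qb *\<^sub>R X1 x0 + (-pb) *\<^sub>R X2 x0 + 0 *\<^sub>R X3 x0"
      by (simp add: e1_def vals)
    have e2x: "e2 L u x0 = (c*pb) *\<^sub>R X1 x0 + (c*qb) *\<^sub>R X2 x0 + (-m) *\<^sub>R X3t L x0"
      by (simp add: e2_def vals)
    have e2x': "e2 L u x0 = (c*pb) *\<^sub>R X1 x0 + (c*qb) *\<^sub>R X2 x0 + (-m*t) *\<^sub>R X3 x0"
      by (simp add: e2_def vals X3tx)
    have vLr: "\<forall>y\<in>Mset. vL L u y = pbarL L u y *\<^sub>R X1 y + qbarL L u y *\<^sub>R X2 y + rbarL L u y *\<^sub>R X3t L y"
      by (simp add: vL_def)
    note I1 = nabla1_ip[where X="e1 u" and x=x0 and Y="vL L u", OF L x0M vLr e1x]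
    note I2 = nabla1_ip[where X="e2 L u" and x=x0 and Y="vL L u", OF L x0M vLr e2x]
    have zero: "(c * pb) * (q / lt) - (c * qb) * (p / lt) = 0"
      by (simp add: pb_def qb_def field_simps)
    have "meanH L \<alpha> u x0 = gL L x0 (nabla1 L \<alpha> (e1 u) (vL L u) x0) (e1 u x0)
         + gL L x0 (nabla1 L \<alpha> (e2 L u) (vL L u) x0) (e2 L u x0)"
      by (simp add: meanH_def IIf_def eframe_def)
    also have "\<dots> = Ef \<alpha> p q r A1 A2 A3 B1 B2 B3 C1 C2 C3 t"
      unfolding I1 I2 vals zero unfolding vf_def frechet_derivative_at[OF hA, symmetric]
        frechet_derivative_at[OF hB, symmetric] frechet_derivative_at[OF hC, symmetric]
      unfolding e1x' e2x' lin3[OF lp(1)] lin3[OF lp(2)] lin3[OF lp(3)]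
        A1_def[symmetric] A2_def[symmetric] A3_def[symmetric] B1_def[symmetric] B2_def[symmetric]
        B3_def[symmetric] C1_def[symmetric] C2_def[symmetric] C3_def[symmetric]
      unfolding Ef_def Let_def lt_def[symmetric] pb_def[symmetric] qb_def[symmetric] c_def[symmetric] m_def[symmetric]
      by (simp add: algebra_simps power2_eq_square add_divide_distrib diff_divide_distrib)
    finally show ?thesis by (simp add: t_def)
  qed
  have lim1: "((\<lambda>L::real. 1 / sqrt L) \<longlongrightarrow> 0) at_top" by real_asymp
  have lim2: "((\<lambda>L. Ef \<alpha> p q r A1 A2 A3 B1 B2 B3 C1 C2 C3 (1 / sqrt L)) \<longlongrightarrow> Ef \<alpha> p q r A1 A2 A3 B1 B2 B3 C1 C2 C3 0) at_top"
    by (rule isCont_tendsto_compose[OF Ef_cont[OF pos] lim1])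
  have ev: "eventually (\<lambda>L. Ef \<alpha> p q r A1 A2 A3 B1 B2 B3 C1 C2 C3 (1 / sqrt L) = meanH L \<alpha> u x0) at_top"
    using eventually_gt_at_top[of 0] by eventually_elim (simp add: main_eq)
  show ?thesis unfolding target using Lim_transform_eventually[OF lim2 ev] .
qed
end
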